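(* Let $(G,\alpha)$ be a finite Hom-group and $H\preceq G$. Then the set of left cosets $\{gH: g\in G\}$, where $gH=\{gh:h\in H\}$, is a partition of $G$.
   Context: A Hom-group is a tuple $(G,\mu,1,\alpha)$ where $G$ is a set, $\mu:G\times G\to G$ is a binary operation written $\mu(g,h)=gh$, $1\in G$ is a distinguished element, and $\alpha:G\to G$ is a bijection, such that: (1) Hom-associativity: $\alpha(g)(hk)=(gh)\alpha(k)$ for all $g,h,k\in G$; (2) $\alpha(gk)=\alpha(g)\alpha(k)$ for all $g,k$; (3) Hom-unitality: $g1=1g=\alpha(g)$ for all $g$, and $\alpha(1)=1$; (4) for every $g\in G$ there exists $g^{-1}\in G$ with $gg^{-1}=g^{-1}g=1$ (such an inverse is unique). A Hom-subgroup of $(G,\alpha)$ is a subset $H\subseteq G$ such that $H$, with the restriction of the multiplication of $G$, the element $1$, and the restriction of $\alpha$, is itself a Hom-group (in particular $1\in H$, $H$ is closed under multiplication and inverses, and $\alpha$ restricts to a bijection $H\to H$). We write $H\preceq G$. *)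

theory Defs
  imports Main "HOL-Library.Disjoint_Sets"
begin

definition hom_group :: "'a set \<Rightarrow> ('a \<Rightarrow> 'a \<Rightarrow> 'a) \<Rightarrow> 'a \<Rightarrow> ('a \<Rightarrow> 'a) \<Rightarrow> bool" where
  "hom_group G mult one alpha \<longleftrightarrow>
     (\<forall>g\<in>G. \<forall>h\<in>G. mult g h \<in> G) \<and>
     one \<in> G \<and>
     bij_betw alpha G G \<and>
     (\<forall>g\<in>G. \<forall>h\<in>G. \<forall>k\<in>G. mult (alpha g) (mult h k) = mult (mult g h) (alpha k)) \<and>
     (\<forall>g\<in>G. \<forall>k\<in>G. alpha (mult g k) = mult (alpha g) (alpha k)) \<and>
     (\<forall>g\<in>G. mult g one = alpha g \<and> mult one g = alpha g) \<and>
     alpha one = one \<and>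
     (\<forall>g\<in>G. \<exists>g'\<in>G. mult g g' = one \<and> mult g' g = one)"

definition hom_subgroup :: "'a set \<Rightarrow> 'a set \<Rightarrow> ('a \<Rightarrow> 'a \<Rightarrow> 'a) \<Rightarrow> 'a \<Rightarrow> ('a \<Rightarrow> 'a) \<Rightarrow> bool" where
  "hom_subgroup H G mult one alpha \<longleftrightarrow> H \<subseteq> G \<and> hom_group H mult one alpha"

definition hom_lcoset :: "('a \<Rightarrow> 'a \<Rightarrow> 'a) \<Rightarrow> 'a \<Rightarrow> 'a set \<Rightarrow> 'a set" where
  "hom_lcoset mult g H = (\<lambda>h. mult g h) ` H"

end

theory Submission
  imports Defs
begin

theorem mainTheorem8:
  fixes G H :: "'a set" and mult :: "'a \<Rightarrow> 'a \<Rightarrow> 'a" and one :: 'a and alpha :: "'a \<Rightarrow> 'a"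
  assumes "hom_group G mult one alpha"
    and "finite G"
    and "hom_subgroup H G mult one alpha"
  shows "partition_on G {hom_lcoset mult g H | g. g \<in> G}"
proof -
  note hg = assms(1)[unfolded hom_group_def]
  have clos: "\<And>x y. x \<in> G \<Longrightarrow> y \<in> G \<Longrightarrow> mult x y \<in> G" using hg by blast
  have oneG: "one \<in> G" using hg by blast
  have bij: "bij_betw alpha G G" using hg by blast
  have hass: "\<And>x y z. x \<in> G \<Longrightarrow> y \<in> G \<Longrightarrow> z \<in> G \<Longrightarrow> mult (alpha x) (mult y z) = mult (mult x y) (alpha z)" using hg by blast
  have amul: "\<And>x y. x \<in> G \<Longrightarrow> y \<in> G \<Longrightarrow> alpha (mult x y) = mult (alpha x) (alpha y)" using hg by blast
  have unit: "\<And>x. x \<in> G \<Longrightarrow> mult x one = alpha x \<and> mult one x = alpha x" using hg by blast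
  have a1: "alpha one = one" using hg by blast
  note hs = assms(3)[unfolded hom_subgroup_def hom_group_def]
  have HG: "H \<subseteq> G" using hs by blast
  have closH: "\<And>x y. x \<in> H \<Longrightarrow> y \<in> H \<Longrightarrow> mult x y \<in> H" using hs by blast
  have bijH: "bij_betw alpha H H" using hs by blast
  have invH: "\<And>x. x \<in> H \<Longrightarrow> \<exists>y\<in>H. mult x y = one \<and> mult y x = one" using hs by blast
  define b where "b = inv_into G alpha"
  have bG: "\<And>x. x \<in> G \<Longrightarrow> b x \<in> G" unfolding b_def using bij
    by (metis bij_betw_def inv_into_into)
  have ab: "\<And>x. x \<in> G \<Longrightarrow> alpha (b x) = x" unfolding b_def using bij
    by (meson bij_betw_inv_into_right)
  have ba: "\<And>x. x \<in> G \<Longrightarrow> b (alpha x) = x" unfolding b_def using bij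
    by (meson bij_betw_inv_into_left)
  have bH: "\<And>x. x \<in> H \<Longrightarrow> b x \<in> H"
  proof -
    fix x assume x: "x \<in> H"
    then obtain y where y: "y \<in> H" "x = alpha y" using bijH by (metis bij_betw_def imageE)
    then show "b x \<in> H" using ba HG by auto
  qed
  have b1: "b one = one" using ba a1 oneG by metis
  have bmul: "\<And>x y. x \<in> G \<Longrightarrow> y \<in> G \<Longrightarrow> b (mult x y) = mult (b x) (b y)"
  proof -
    fix x y assume xy: "x \<in> G" "y \<in> G"
    have "alpha (mult (b x) (b y)) = mult x y" using amul[OF bG bG] ab xy by simp
    then show "b (mult x y) = mult (b x) (b y)" using ba clos bG xy by metis
  qed
  define m where "m x y = b (mult x y)" for x y
  have mG: "\<And>x y. x \<in> G \<Longrightarrow> y \<in> G \<Longrightarrow> m x y \<in> G" unfolding m_def using bG clos by blast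
  have mH: "\<And>x y. x \<in> H \<Longrightarrow> y \<in> H \<Longrightarrow> m x y \<in> H" unfolding m_def using bH closH by blast
  have massoc: "\<And>x y z. x \<in> G \<Longrightarrow> y \<in> G \<Longrightarrow> z \<in> G \<Longrightarrow> m (m x y) z = m x (m y z)"
  proof -
    fix x y z assume G: "x \<in> G" "y \<in> G" "z \<in> G"
    have "m (m x y) z = b (mult (b (mult x y)) (b (alpha z)))" unfolding m_def using ba G by simp
    also have "\<dots> = b (b (mult (mult x y) (alpha z)))" using bmul G clos bij
      by (metis bij_betw_apply)
    also have "\<dots> = b (b (mult (alpha x) (mult y z)))" using hass G by simp
    also have "\<dots> = b (mult (b (alpha x)) (b (mult y z)))" using bmul G clos bij
      by (metis bij_betw_apply)
    also have "\<dots> = m x (m y z)" unfolding m_def using ba G by simp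
    finally show "m (m x y) z = m x (m y z)" .
  qed
  have munit: "\<And>x. x \<in> G \<Longrightarrow> m x one = x \<and> m one x = x" unfolding m_def using unit ba by simp
  have minv: "\<And>x. x \<in> H \<Longrightarrow> \<exists>y\<in>H. m x y = one \<and> m y x = one"
    unfolding m_def using invH b1 by metis
  have sub: "\<And>g1 g2 x. g1 \<in> G \<Longrightarrow> g2 \<in> G \<Longrightarrow> x \<in> m g1 ` H \<Longrightarrow> x \<in> m g2 ` H \<Longrightarrow> m g1 ` H \<subseteq> m g2 ` H"
  proof -
    fix g1 g2 x assume g: "g1 \<in> G" "g2 \<in> G" and x1: "x \<in> m g1 ` H" and x2: "x \<in> m g2 ` H"
    obtain h1 where h1: "h1 \<in> H" "x = m g1 h1" using x1 by blast
    obtain h2 where h2: "h2 \<in> H" "x = m g2 h2" using x2 by blast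
    obtain h1' where h1': "h1' \<in> H" "m h1 h1' = one" using minv h1 by blast
    show "m g1 ` H \<subseteq> m g2 ` H"
    proof
      fix y assume "y \<in> m g1 ` H"
      then obtain h where h: "h \<in> H" "y = m g1 h" by blast
      have "m g1 h = m g1 (m (m h1 h1') h)" using h1' munit h HG by auto
      also have "\<dots> = m (m g1 h1) (m h1' h)" using massoc g h h1 h1' HG mG by (metis subsetD)
      also have "\<dots> = m (m g2 h2) (m h1' h)" using h1 h2 by simp
      also have "\<dots> = m g2 (m h2 (m h1' h))" using massoc g h h2 h1' HG mG by (metis subsetD)
      finally show "y \<in> m g2 ` H" using h mH h2 h1' by auto
    qed
  qed
  have coset: "\<And>g. g \<in> G \<Longrightarrow> hom_lcoset mult g H = alpha ` (m g ` H)"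
    unfolding hom_lcoset_def m_def image_image using ab clos HG
    by (intro image_cong) auto
  have injA: "inj_on alpha G" using bij bij_betw_def by blast
  have mgsub: "\<And>g. g \<in> G \<Longrightarrow> m g ` H \<subseteq> G" using mG HG by blast
  show ?thesis
  proof (rule partition_onI)
    show "\<Union> {hom_lcoset mult g H | g. g \<in> G} = G"
    proof
      show "\<Union> {hom_lcoset mult g H | g. g \<in> G} \<subseteq> G"
        unfolding hom_lcoset_def using clos HG by blast
      show "G \<subseteq> \<Union> {hom_lcoset mult g H | g. g \<in> G}"
      proof
        fix x assume x: "x \<in> G"
        have "x = mult (b x) one" using unit ab bG x by metis
        then have "x \<in> hom_lcoset mult (b x) H" unfolding hom_lcoset_def using hs by blast
        then show "x \<in> \<Union> {hom_lcoset mult g H | g. g \<in> G}" using bG x by blast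
      qed
    qed
  next
    fix p q assume p: "p \<in> {hom_lcoset mult g H | g. g \<in> G}" and q: "q \<in> {hom_lcoset mult g H | g. g \<in> G}"
      and ne: "p \<noteq> q"
    obtain g1 where g1: "g1 \<in> G" "p = alpha ` (m g1 ` H)" using p coset by blast
    obtain g2 where g2: "g2 \<in> G" "q = alpha ` (m g2 ` H)" using q coset by blast
    show "disjnt p q"
    proof (rule ccontr)
      assume "\<not> disjnt p q"
      then obtain y where y: "y \<in> p" "y \<in> q" unfolding disjnt_def by blast
      obtain x1 where x1: "x1 \<in> m g1 ` H" "y = alpha x1" using y g1 by blast
      obtain x2 where x2: "x2 \<in> m g2 ` H" "y = alpha x2" using y g2 by blast
      have "x1 = x2" using injA x1 x2 mgsub g1 g2 by (meson inj_onD subsetD)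
      then have "m g1 ` H = m g2 ` H" using sub g1 g2 x1 x2 by (metis subset_antisym)
      then show False using ne g1 g2 by simp
    qed
  next
    show "{} \<notin> {hom_lcoset mult g H | g. g \<in> G}"
      unfolding hom_lcoset_def using hs by blast
  qed
qed

end
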